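(* Consider the two-type Bellman–Harris process described in the context. Let $H(t),k_1(t),k_2(t)$ be nonnegative functions on $[0,\infty)$ with $\lim_{t\to\infty}k_i(t)=0$ ($i=1,2$) and $\lim_{t\to\infty}H(t)=\infty$. Suppose $$\lim_{t\to\infty}H(t)\mathbf{Q}(t;1-\lambda_1k_1(t),1-\lambda_2k_2(t))=\mathbf{h}(\lambda_1,\lambda_2),\quad\lambda_1\ge0,\ \lambda_2\ge0,$$ for a function $\mathbf{h}=(h_1,h_2)$ whose components are continuous in both arguments. Then $$\lim_{t\to\infty}H(t)\mathbf{Q}(t;e^{-\lambda_1k_3(t)},e^{-\lambda_2k_4(t)})=\mathbf{h}(\lambda_1,\lambda_2)$$ for any functions $k_3,k_4$ with $\lim_{t\to\infty}k_3(t)/k_1(t)=1$ and $\lim_{t\to\infty}k_4(t)/k_2(t)=1$.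
   Context: Two-type Bellman–Harris branching process $\mathbf{Z}(t)=(Z_1(t),Z_2(t))$ (particles of type $i\in\{1,2\}$ have life-length distribution $G_i$ and offspring generating function $f_i(s_1,s_2)$, and evolve independently). For $\mathbf{s}=(s_1,s_2)\in[0,1]^2$, $F_i(t;\mathbf{s})=\mathbf{E}[s_1^{Z_1(t)}s_2^{Z_2(t)}\mid\text{one initial particle of type }i]$ and $\mathbf{Q}(t;\mathbf{s})=(1-F_1(t;\mathbf{s}),1-F_2(t;\mathbf{s}))^\dagger$. *)

theory Defs
  imports "HOL-Probability.Probability"
begin

definition pgf2 :: "(nat \<times> nat) pmf \<Rightarrow> real \<Rightarrow> real \<Rightarrow> real" where
  "pgf2 p s1 s2 = measure_pmf.expectation p (\<lambda>(a, b). s1 ^ a * s2 ^ b)"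

text \<open>Two-type Bellman--Harris process, described through its data:
  G i = life-length distribution of type i (a probability measure on [0,inf)),
  off i = offspring distribution of type i (so f_i = pgf2 (off i)),
  Zd i t = distribution of (Z1(t),Z2(t)) started from one particle of type i,
  so F_i(t;s) = pgf2 (Zd i t) s1 s2.  The family is required to satisfy the
  Bellman--Harris integral equation
  F_i(t;s) = s_i (1 - G_i(t)) + int_[0,t] f_i(F(t-u;s)) dG_i(u).\<close>
definition bellman_harris ::
  "(nat \<Rightarrow> real measure) \<Rightarrow> (nat \<Rightarrow> (nat \<times> nat) pmf) \<Rightarrow> (nat \<Rightarrow> real \<Rightarrow> (nat \<times> nat) pmf) \<Rightarrow> bool" where
  "bellman_harris G off Zd \<longleftrightarrow>
     (\<forall>i\<in>{1,2::nat}.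
        prob_space (G i) \<and> sets (G i) = sets borel \<and> measure (G i) {..<0} = 0 \<and>
        Zd i 0 = return_pmf (if i = 1 then (1, 0) else (0, 1)) \<and>
        (\<forall>t\<ge>0. \<forall>s1\<in>{0..1}. \<forall>s2\<in>{0..1}.
           pgf2 (Zd i t) s1 s2 =
             (if i = 1 then s1 else s2) * (1 - measure (G i) {..t}) +
             (LINT u:{0..t}|G i. pgf2 (off i) (pgf2 (Zd 1 (t - u)) s1 s2) (pgf2 (Zd 2 (t - u)) s1 s2))))"

definition Qvec :: "(nat \<Rightarrow> real \<Rightarrow> (nat \<times> nat) pmf) \<Rightarrow> real \<Rightarrow> real \<Rightarrow> real \<Rightarrow> real \<times> real" where
  "Qvec Zd t s1 s2 = (1 - pgf2 (Zd 1 t) s1 s2, 1 - pgf2 (Zd 2 t) s1 s2)"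

end

theory Submission
  imports Defs
begin

lemma exp_quad: assumes "(y::real) \<ge> 0" shows "exp (-y) \<le> 1 - y + y^2"
proof -
  have "1 + y \<le> exp y" by (rule exp_ge_add_one_self)
  have "exp (-y) = 1 / exp y" by (simp add: exp_minus field_simps)
  also have "\<dots> \<le> 1 / (1+y)" using assms \<open>1 + y \<le> exp y\<close> by (intro divide_left_mono) auto
  also have "\<dots> \<le> 1 - y + y^2"
  proof -
    have "1 \<le> (1 - y + y^2) * (1+y)" using assms by (simp add: algebra_simps power2_eq_square power3_eq_cube)
    thus ?thesis using assms by (simp add: divide_simps)
  qed
  finally show ?thesis .
qed

lemma pgf2_mono:
  assumes "0 \<le> a1" "a1 \<le> b1" "b1 \<le> 1" "0 \<le> a2" "a2 \<le> b2" "b2 \<le> 1"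
  shows "pgf2 p a1 a2 \<le> pgf2 p b1 b2"
  unfolding pgf2_def
proof (rule integral_mono)
  show "integrable (measure_pmf p) (\<lambda>(a, b). a1 ^ a * a2 ^ b)"
    by (rule measure_pmf.integrable_const_bound[where B=1])
       (use assms in \<open>auto intro!: AE_I2 simp: abs_mult power_le_one split: prod.splits intro!: mult_le_one power_le_one\<close>)
  show "integrable (measure_pmf p) (\<lambda>(a, b). b1 ^ a * b2 ^ b)"
    by (rule measure_pmf.integrable_const_bound[where B=1])
       (use assms in \<open>auto intro!: AE_I2 simp: abs_mult power_le_one split: prod.splits intro!: mult_le_one power_le_one\<close>)
  fix x show "(case x of (a, b) \<Rightarrow> a1 ^ a * a2 ^ b) \<le> (case x of (a, b) \<Rightarrow> b1 ^ a * b2 ^ b)"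
    using assms by (auto split: prod.splits intro!: mult_mono power_mono zero_le_power)
qed
lemma bnd:
  fixes k k' :: "real \<Rightarrow> real"
  assumes k: "(k \<longlongrightarrow> 0) at_top" and r: "((\<lambda>t. k' t / k t) \<longlongrightarrow> 1) at_top"
    and nn: "\<forall>t\<ge>0. k t \<ge> 0" and l: "l \<ge> 0" and d: "\<delta> > 0"
  shows "\<forall>\<^sub>F t in at_top. 0 \<le> 1 - (l+\<delta>)*k t \<and> 1-(l+\<delta>)*k t \<le> exp(- l*k' t)
     \<and> exp(- l*k' t) \<le> 1 - max (l-\<delta>) 0 * k t \<and> 1 - max (l-\<delta>) 0 * k t \<le> 1"
proof -
  define \<eta> where "\<eta> = min (1/2) (\<delta>/(2*(l+1)))"
  define \<kappa> where "\<kappa> = min (1/(l+\<delta>+1)) (\<delta>/(8*l*l+1))"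
  have \<eta>: "\<eta> > 0" "\<eta> \<le> 1/2" "\<eta> \<le> \<delta>/(2*(l+1))" using l d by (auto simp: \<eta>_def min_def)
  have \<kappa>: "\<kappa> > 0" "\<kappa> \<le> 1/(l+\<delta>+1)" "\<kappa> \<le> \<delta>/(8*l*l+1)" using l d by (auto simp: \<kappa>_def intro!: divide_pos_pos add_nonneg_pos)
  have e1: "\<forall>\<^sub>F t in at_top. 1 - \<eta> < k' t / k t" using r \<eta> by (intro order_tendstoD) auto
  have e2: "\<forall>\<^sub>F t in at_top. k' t / k t < 1 + \<eta>" using r \<eta> by (intro order_tendstoD) auto
  have e3: "\<forall>\<^sub>F t in at_top. k t < \<kappa>" using k \<kappa> by (intro order_tendstoD) auto
  have e4: "\<forall>\<^sub>F t in at_top. (t::real) \<ge> 0" by (rule eventually_ge_at_top)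
  show ?thesis using e1 e2 e3 e4
  proof eventually_elim
    case (elim t)
    define q where "q = k' t / k t"
    have kt0: "k t \<ge> 0" using nn elim by auto
    have kpos: "k t > 0"
    proof (rule ccontr)
      assume "\<not> k t > 0" hence "k t = 0" using kt0 by auto
      thus False using elim \<eta> by auto
    qed
    have k': "k' t = q * k t" using kpos by (simp add: q_def)
    have q1: "1 - \<eta> < q" "q < 1 + \<eta>" using elim by (auto simp: q_def)
    have qpos: "q > 0" "q \<le> 2" using q1 \<eta> by auto
    define y where "y = l * q * k t"
    have y0: "y \<ge> 0" using l qpos kpos by (simp add: y_def)
    have ex: "exp (- l * k' t) = exp (- y)" by (simp add: y_def k')
    have A: "(l+\<delta>) * k t \<le> 1"
    proof -
      have "(l+\<delta>) * k t \<le> (l+\<delta>) * (1/(l+\<delta>+1))" using elim \<kappa> l d by (intro mult_left_mono) auto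
      also have "\<dots> \<le> 1" using l d by (simp add: divide_simps)
      finally show ?thesis .
    qed
    have lq: "l * q \<le> l + \<delta>"
    proof -
      have "l * q \<le> l * (1+\<eta>)" using l q1 by (intro mult_left_mono) auto
      moreover have "l * \<eta> \<le> l * (\<delta>/(2*(l+1)))" using l \<eta> by (intro mult_left_mono) auto
      moreover have "l * (\<delta>/(2*(l+1))) \<le> \<delta>/2" using l d by (simp add: divide_simps)
      moreover have "l*(1+\<eta>) = l + l*\<eta>" by (simp add: algebra_simps)
      ultimately show ?thesis using d by linarith
    qed
    have B: "1 - (l+\<delta>)*k t \<le> exp (- y)"
    proof -
      have "y \<le> (l+\<delta>) * k t" unfolding y_def using lq kpos by (intro mult_right_mono) auto
      moreover have "1 - y \<le> exp (-y)" using exp_ge_add_one_self[of "-y"] by simp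
      ultimately show ?thesis by linarith
    qed
    have C: "exp (-y) \<le> 1 - max (l-\<delta>) 0 * k t"
    proof (cases "l \<le> \<delta>")
      case True thus ?thesis using y0 by simp
    next
      case False
      have lq2: "l * q \<ge> l - \<delta>/2"
      proof -
        have "l * (1-\<eta>) \<le> l * q" using l q1 by (intro mult_left_mono) auto
        moreover have "l * \<eta> \<le> l * (\<delta>/(2*(l+1)))" using l \<eta> by (intro mult_left_mono) auto
        moreover have "l * (\<delta>/(2*(l+1))) \<le> \<delta>/2" using l d by (simp add: divide_simps)
        moreover have "l*(1-\<eta>) = l - l*\<eta>" by (simp add: algebra_simps)
        ultimately show ?thesis by linarith
      qed
      have sq: "(l*q)^2 * k t \<le> \<delta>/2"
      proof -
        have "(l*q)^2 \<le> (2*l)^2" using l qpos mult_left_mono[of q 2 l] by (intro power_mono) (auto simp: mult.commute)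
        hence "(l*q)^2 * k t \<le> (4*l*l) * k t" using kpos by (intro mult_right_mono) (auto simp: power2_eq_square)
        also have "\<dots> \<le> (4*l*l) * (\<delta>/(8*l*l+1))" using elim \<kappa> kpos by (intro mult_left_mono) auto
        also have "\<dots> \<le> \<delta>/2" proof -
          have p: "8*l*l+1 > 0" using l by (simp add: add_nonneg_pos)
          have "4*l*l*2 \<le> 8*l*l+1" by simp
          hence "(4*l*l)*\<delta>*2 \<le> (8*l*l+1)*\<delta>" using d mult_right_mono[of "4*l*l*2" "8*l*l+1" \<delta>] by (simp add: algebra_simps)
          thus ?thesis using p by (simp add: divide_simps algebra_simps)
        qed
        finally show ?thesis .
      qed
      have "y - y^2 = k t * (l*q - (l*q)^2 * k t)" by (simp add: y_def power2_eq_square algebra_simps)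
      also have "\<dots> \<ge> k t * (l - \<delta>)" using kpos lq2 sq by (intro mult_left_mono) auto
      finally have "y - y^2 \<ge> (l - \<delta>) * k t" by (simp add: mult.commute)
      moreover have "exp (-y) \<le> 1 - y + y^2" using exp_quad y0 by auto
      ultimately show ?thesis using False by simp
    qed
    have m: "max (l-\<delta>) 0 * k t \<ge> 0" using kt0 by simp
    show ?case using A B C m unfolding ex by linarith
  qed
qed
lemma core:
  fixes F :: "real \<Rightarrow> real \<Rightarrow> real \<Rightarrow> real" and g :: "real \<Rightarrow> real \<Rightarrow> real"
    and H k1 k2 k3 k4 :: "real \<Rightarrow> real"
  assumes mono: "\<And>t a1 a2 b1 b2. 0\<le>a1 \<Longrightarrow> a1\<le>b1 \<Longrightarrow> b1\<le>1 \<Longrightarrow> 0\<le>a2 \<Longrightarrow> a2\<le>b2 \<Longrightarrow> b2\<le>1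
          \<Longrightarrow> F t a1 a2 \<le> F t b1 b2"
    and Hnn: "\<forall>\<^sub>F t in at_top. H t \<ge> 0"
    and lim: "\<forall>l1\<ge>0. \<forall>l2\<ge>0. ((\<lambda>t. H t * (1 - F t (1 - l1*k1 t) (1 - l2*k2 t))) \<longlongrightarrow> g l1 l2) at_top"
    and gc: "continuous_on ({0..}\<times>{0..}) (\<lambda>(x,y). g x y)"
    and b1: "\<And>l \<delta>. l \<ge> 0 \<Longrightarrow> \<delta> > 0 \<Longrightarrow> \<forall>\<^sub>F t in at_top. 0 \<le> 1 - (l+\<delta>)*k1 t \<and> 1-(l+\<delta>)*k1 t \<le> exp(- l*k3 t)
     \<and> exp(- l*k3 t) \<le> 1 - max (l-\<delta>) 0 * k1 t \<and> 1 - max (l-\<delta>) 0 * k1 t \<le> 1"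
    and b2: "\<And>l \<delta>. l \<ge> 0 \<Longrightarrow> \<delta> > 0 \<Longrightarrow> \<forall>\<^sub>F t in at_top. 0 \<le> 1 - (l+\<delta>)*k2 t \<and> 1-(l+\<delta>)*k2 t \<le> exp(- l*k4 t)
     \<and> exp(- l*k4 t) \<le> 1 - max (l-\<delta>) 0 * k2 t \<and> 1 - max (l-\<delta>) 0 * k2 t \<le> 1"
    and l1: "l1 \<ge> 0" and l2: "l2 \<ge> 0"
  shows "((\<lambda>t. H t * (1 - F t (exp(- l1*k3 t)) (exp(- l2*k4 t)))) \<longlongrightarrow> g l1 l2) at_top"
proof (rule order_tendstoI)
  let ?G = "\<lambda>(x,y). g x y"
  fix a assume a: "a < g l1 l2"
  have "((\<lambda>\<delta>. (max (l1-\<delta>) 0, max (l2-\<delta>) 0)) \<longlongrightarrow> (max (l1-0) 0, max (l2-0) 0)) (at_right 0)"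
    by (intro tendsto_intros)
  hence tl: "((\<lambda>\<delta>. (max (l1-\<delta>) 0, max (l2-\<delta>) 0)) \<longlongrightarrow> (l1, l2)) (at_right 0)" using l1 l2 by simp
  have "((\<lambda>\<delta>. ?G (max (l1-\<delta>) 0, max (l2-\<delta>) 0)) \<longlongrightarrow> ?G (l1,l2)) (at_right 0)"
    by (rule continuous_on_tendsto_compose[OF gc tl]) (use l1 l2 in auto)
  hence "\<forall>\<^sub>F \<delta> in at_right 0. a < g (max (l1-\<delta>) 0) (max (l2-\<delta>) 0)"
    using a by (intro order_tendstoD) (auto simp: o_def)
  moreover have "\<forall>\<^sub>F \<delta> in at_right (0::real). 0 < \<delta>" by (simp add: eventually_at_right_less)
  ultimately have "\<forall>\<^sub>F \<delta> in at_right (0::real). 0 < \<delta> \<and> a < g (max (l1-\<delta>) 0) (max (l2-\<delta>) 0)"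
    by (rule eventually_conj[rotated])
  then obtain \<delta> where d: "0 < \<delta>" "a < g (max (l1-\<delta>) 0) (max (l2-\<delta>) 0)"
    using eventually_happens[of _ "at_right (0::real)"] by auto
  define m1 where "m1 = max (l1-\<delta>) 0"
  define m2 where "m2 = max (l2-\<delta>) 0"
  have "\<forall>\<^sub>F t in at_top. a < H t * (1 - F t (1 - m1*k1 t) (1 - m2*k2 t))"
    using lim d unfolding m1_def m2_def by (intro order_tendstoD) auto
  with Hnn b1[OF l1 d(1)] b2[OF l2 d(1)]
  show "\<forall>\<^sub>F t in at_top. a < H t * (1 - F t (exp(- l1*k3 t)) (exp(- l2*k4 t)))"
  proof eventually_elim
    case (elim t)
    have "F t (exp(- l1*k3 t)) (exp(- l2*k4 t)) \<le> F t (1 - m1*k1 t) (1 - m2*k2 t)"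
      using elim unfolding m1_def m2_def by (intro mono) auto
    hence "H t * (1 - F t (1 - m1*k1 t) (1 - m2*k2 t)) \<le> H t * (1 - F t (exp(- l1*k3 t)) (exp(- l2*k4 t)))"
      using elim by (intro mult_left_mono) auto
    thus ?case using elim by linarith
  qed
next
  let ?G = "\<lambda>(x,y). g x y"
  fix a assume a: "a > g l1 l2"
  have "((\<lambda>\<delta>. (l1+\<delta>, l2+\<delta>)) \<longlongrightarrow> (l1+0, l2+0)) (at_right 0)"
    by (intro tendsto_intros)
  hence tl: "((\<lambda>\<delta>. (l1+\<delta>, l2+\<delta>)) \<longlongrightarrow> (l1, l2)) (at_right 0)" by simp
  have ev: "\<forall>\<^sub>F \<delta> in at_right (0::real). 0 < \<delta>" by (simp add: eventually_at_right_less)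
  have "((\<lambda>\<delta>. ?G (l1+\<delta>, l2+\<delta>)) \<longlongrightarrow> ?G (l1,l2)) (at_right 0)"
    by (rule continuous_on_tendsto_compose[OF gc tl]) (use l1 l2 in \<open>auto intro: eventually_mono[OF ev]\<close>)
  hence "\<forall>\<^sub>F \<delta> in at_right 0. g (l1+\<delta>) (l2+\<delta>) < a"
    using a by (intro order_tendstoD) (auto simp: o_def)
  with ev have "\<forall>\<^sub>F \<delta> in at_right (0::real). 0 < \<delta> \<and> g (l1+\<delta>) (l2+\<delta>) < a"
    by (rule eventually_conj)
  then obtain \<delta> where d: "0 < \<delta>" "g (l1+\<delta>) (l2+\<delta>) < a"
    using eventually_happens[of _ "at_right (0::real)"] by auto
  have "\<forall>\<^sub>F t in at_top. H t * (1 - F t (1 - (l1+\<delta>)*k1 t) (1 - (l2+\<delta>)*k2 t)) < a"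
    using lim d l1 l2 by (intro order_tendstoD) auto
  with Hnn b1[OF l1 d(1)] b2[OF l2 d(1)]
  show "\<forall>\<^sub>F t in at_top. H t * (1 - F t (exp(- l1*k3 t)) (exp(- l2*k4 t))) < a"
  proof eventually_elim
    case (elim t)
    have "F t (1 - (l1+\<delta>)*k1 t) (1 - (l2+\<delta>)*k2 t) \<le> F t (exp(- l1*k3 t)) (exp(- l2*k4 t))"
    proof (rule mono)
      show "exp(- l1*k3 t) \<le> 1" "exp(- l2*k4 t) \<le> 1" using elim by linarith+
    qed (use elim in auto)
    hence "H t * (1 - F t (exp(- l1*k3 t)) (exp(- l2*k4 t))) \<le> H t * (1 - F t (1 - (l1+\<delta>)*k1 t) (1 - (l2+\<delta>)*k2 t))"
      using elim by (intro mult_left_mono) auto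
    thus ?case using elim by linarith
  qed
qed
theorem lemma5:
  fixes G :: "nat \<Rightarrow> real measure" and off :: "nat \<Rightarrow> (nat \<times> nat) pmf"
    and Zd :: "nat \<Rightarrow> real \<Rightarrow> (nat \<times> nat) pmf"
    and H k1 k2 k3 k4 :: "real \<Rightarrow> real" and h :: "real \<Rightarrow> real \<Rightarrow> real \<times> real"
  assumes BH: "bellman_harris G off Zd"
    and nonneg: "\<forall>t\<ge>0. H t \<ge> 0 \<and> k1 t \<ge> 0 \<and> k2 t \<ge> 0"
    and k1: "(k1 \<longlongrightarrow> 0) at_top" and k2: "(k2 \<longlongrightarrow> 0) at_top"
    and H: "filterlim H at_top at_top"
    and lim: "\<forall>l1\<ge>0. \<forall>l2\<ge>0.
       ((\<lambda>t. H t *\<^sub>R Qvec Zd t (1 - l1 * k1 t) (1 - l2 * k2 t)) \<longlongrightarrow> h l1 l2) at_top"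
    and hcont: "continuous_on ({0..} \<times> {0..}) (\<lambda>(x, y). h x y)"
    and k3: "((\<lambda>t. k3 t / k1 t) \<longlongrightarrow> 1) at_top"
    and k4: "((\<lambda>t. k4 t / k2 t) \<longlongrightarrow> 1) at_top"
  shows "\<forall>l1\<ge>0. \<forall>l2\<ge>0.
       ((\<lambda>t. H t *\<^sub>R Qvec Zd t (exp (- l1 * k3 t)) (exp (- l2 * k4 t))) \<longlongrightarrow> h l1 l2) at_top"
proof (intro allI impI)
  fix l1 l2 :: real assume l1: "l1 \<ge> 0" and l2: "l2 \<ge> 0"
  have nn1: "\<forall>t\<ge>0. k1 t \<ge> 0" and nn2: "\<forall>t\<ge>0. k2 t \<ge> 0" using nonneg by auto
  have Hnn: "\<forall>\<^sub>F t in at_top. H t \<ge> 0"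
    using eventually_ge_at_top[of "0::real"] by eventually_elim (use nonneg in auto)
  have mono: "\<And>i t a1 a2 b1 b2. 0\<le>a1 \<Longrightarrow> a1\<le>b1 \<Longrightarrow> b1\<le>1 \<Longrightarrow> 0\<le>a2 \<Longrightarrow> a2\<le>b2 \<Longrightarrow> b2\<le>1
          \<Longrightarrow> pgf2 (Zd i t) a1 a2 \<le> pgf2 (Zd i t) b1 b2"
    by (rule pgf2_mono)
  have limF: "\<forall>l1\<ge>0. \<forall>l2\<ge>0. ((\<lambda>t. H t * (1 - pgf2 (Zd 1 t) (1 - l1*k1 t) (1 - l2*k2 t))) \<longlongrightarrow> fst (h l1 l2)) at_top"
  proof (intro allI impI)
    fix a b :: real assume "a \<ge> 0" "b \<ge> 0"
    with lim have "((\<lambda>t. H t *\<^sub>R Qvec Zd t (1 - a * k1 t) (1 - b * k2 t)) \<longlongrightarrow> h a b) at_top" by auto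
    from tendsto_fst[OF this] show "((\<lambda>t. H t * (1 - pgf2 (Zd 1 t) (1 - a*k1 t) (1 - b*k2 t))) \<longlongrightarrow> fst (h a b)) at_top"
      by (simp add: Qvec_def)
  qed
  have limS: "\<forall>l1\<ge>0. \<forall>l2\<ge>0. ((\<lambda>t. H t * (1 - pgf2 (Zd 2 t) (1 - l1*k1 t) (1 - l2*k2 t))) \<longlongrightarrow> snd (h l1 l2)) at_top"
  proof (intro allI impI)
    fix a b :: real assume "a \<ge> 0" "b \<ge> 0"
    with lim have "((\<lambda>t. H t *\<^sub>R Qvec Zd t (1 - a * k1 t) (1 - b * k2 t)) \<longlongrightarrow> h a b) at_top" by auto
    from tendsto_snd[OF this] show "((\<lambda>t. H t * (1 - pgf2 (Zd 2 t) (1 - a*k1 t) (1 - b*k2 t))) \<longlongrightarrow> snd (h a b)) at_top"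
      by (simp add: Qvec_def)
  qed
  have cF: "continuous_on ({0..}\<times>{0..}) (\<lambda>(x,y). fst (h x y))"
    using continuous_on_fst[OF hcont] by (simp add: case_prod_unfold)
  have cS: "continuous_on ({0..}\<times>{0..}) (\<lambda>(x,y). snd (h x y))"
    using continuous_on_snd[OF hcont] by (simp add: case_prod_unfold)
  have A: "((\<lambda>t. H t * (1 - pgf2 (Zd 1 t) (exp(- l1*k3 t)) (exp(- l2*k4 t)))) \<longlongrightarrow> fst (h l1 l2)) at_top"
    by (rule core[where F="\<lambda>t. pgf2 (Zd 1 t)" and g="\<lambda>x y. fst (h x y)", OF mono Hnn limF cF
          bnd[OF k1 k3 nn1] bnd[OF k2 k4 nn2] l1 l2])
  have B: "((\<lambda>t. H t * (1 - pgf2 (Zd 2 t) (exp(- l1*k3 t)) (exp(- l2*k4 t)))) \<longlongrightarrow> snd (h l1 l2)) at_top"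
    by (rule core[where F="\<lambda>t. pgf2 (Zd 2 t)" and g="\<lambda>x y. snd (h x y)", OF mono Hnn limS cS
          bnd[OF k1 k3 nn1] bnd[OF k2 k4 nn2] l1 l2])
  from tendsto_Pair[OF A B]
  show "((\<lambda>t. H t *\<^sub>R Qvec Zd t (exp (- l1 * k3 t)) (exp (- l2 * k4 t))) \<longlongrightarrow> h l1 l2) at_top"
    by (simp add: Qvec_def)
qed

end
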